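(* Let $A$, $Q$, $H\subseteq A^Q$ be non-empty finite sets and $\mathcal F$ a clone with carrier $A$ such that (a) $\mathcal F$ satisfies $\Delta^\partial$, or (b) $\mathcal F$ contains a $\partial$-function and $|H(q)|\le2$ for all $q\in Q$. Suppose $H\in\mathrm{Inv}_Q\mathcal F$. Let $p,q\in Q$ and $a\in H(p)$, and suppose $H$ weakly separates $p$ from $q$ at the point $a$. Then $H$ strongly separates $p$ from $q$ at the point $a$.
   Context: $\mathcal O(A)=\bigcup_{n<\omega}A^{A^n}$; $\mathcal F_{[n]}=\mathcal F\cap A^{A^n}$; $A^3_3$ is the set of triples $\mathbf a=a_0a_1a_2\in A^3$ with three distinct entries, $\mathrm{ran}\,\mathbf a$ the set of entries. A clone with carrier $A$ is a subset of $\mathcal O(A)$ containing all projections and closed under composition. For $f\in\mathcal O(A)_{[n]}$ and $h_i\in A^Q$, $f(h_0,\dots,h_{n-1})$ is $q\mapsto f(h_0(q)\dots h_{n-1}(q))$; $\mathrm{Inv}_Q\mathcal F$ is the set of $H\subseteq A^Q$ closed under all such compositions with $f\in\mathcal F$. $H(q)=\{h(q):h\in H\}$. A $\partial$-function is $\partial\in\mathcal O(A)_{[3]}$ with $\partial(xxy)=\partial(xyx)=\partial(yxx)=x$; $\mathcal F$ satisfies $\Delta^\partial$ if for all $\mathbf a\in A^3_3$ and $a\in\mathrm{ran}\,\mathbf a$ there is a $\partial$-function $\partial\in\mathcal F$ with $\partial(\mathbf a)=a$. $H$ weakly separates $p$ from $q$ at $a\in H(p)$ if there are $h_1,h_2\in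 H$ with $h_1(p)=h_2(p)=a$ and $h_1(q)\ne h_2(q)$. $H$ strongly separates $p$ from $q$ at $a$ if for every $b\in H(q)$ there is $h\in H$ with $h(p)=a$ and $h(q)=b$. *)

theory Defs
  imports "HOL-Library.FuncSet"
begin

text \<open>An n-ary operation on A is represented as a pair (n, f), where
 f :: (nat => 'a) => 'a is an element of A^(A^n), i.e. f maps
 {..<n} ->_E A into A and is undefined (extensional) elsewhere.\<close>

type_synonym 'a op = "nat \<times> ((nat \<Rightarrow> 'a) \<Rightarrow> 'a)"

definition ops :: "'a set \<Rightarrow> nat \<Rightarrow> ((nat \<Rightarrow> 'a) \<Rightarrow> 'a) set" where
  "ops A n = ({..<n} \<rightarrow>\<^sub>E A) \<rightarrow>\<^sub>E A"

definition O_A :: "'a set \<Rightarrow> 'a op set" where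
  "O_A A = {(n, f). f \<in> ops A n}"

definition proj :: "'a set \<Rightarrow> nat \<Rightarrow> nat \<Rightarrow> (nat \<Rightarrow> 'a) \<Rightarrow> 'a" where
  "proj A n i = (\<lambda>x \<in> {..<n} \<rightarrow>\<^sub>E A. x i)"

definition compose :: "'a set \<Rightarrow> nat \<Rightarrow> ((nat \<Rightarrow> 'a) \<Rightarrow> 'a) \<Rightarrow> nat \<Rightarrow> (nat \<Rightarrow> (nat \<Rightarrow> 'a) \<Rightarrow> 'a)
    \<Rightarrow> (nat \<Rightarrow> 'a) \<Rightarrow> 'a" where
  "compose A n f m g = (\<lambda>x \<in> {..<m} \<rightarrow>\<^sub>E A. f (\<lambda>i \<in> {..<n}. g i x))"

definition is_clone :: "'a set \<Rightarrow> 'a op set \<Rightarrow> bool" where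
  "is_clone A F \<longleftrightarrow> F \<subseteq> O_A A
     \<and> (\<forall>n i. i < n \<longrightarrow> (n, proj A n i) \<in> F)
     \<and> (\<forall>n f m g. (n, f) \<in> F \<longrightarrow> (\<forall>i<n. (m, g i) \<in> F) \<longrightarrow> (m, compose A n f m g) \<in> F)"

definition tup3 :: "'a \<Rightarrow> 'a \<Rightarrow> 'a \<Rightarrow> nat \<Rightarrow> 'a" where
  "tup3 x y z = (\<lambda>i \<in> {..<3::nat}. if i = 0 then x else if i = 1 then y else z)"

definition is_partial_fun :: "'a set \<Rightarrow> ((nat \<Rightarrow> 'a) \<Rightarrow> 'a) \<Rightarrow> bool" where
  "is_partial_fun A d \<longleftrightarrow> d \<in> ops A 3 \<and>
     (\<forall>x\<in>A. \<forall>y\<in>A. d (tup3 x x y) = x \<and> d (tup3 x y x) = x \<and> d (tup3 y x x) = x)"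

definition Delta_partial :: "'a set \<Rightarrow> 'a op set \<Rightarrow> bool" where
  "Delta_partial A F \<longleftrightarrow>
     (\<forall>a0\<in>A. \<forall>a1\<in>A. \<forall>a2\<in>A. a0 \<noteq> a1 \<and> a0 \<noteq> a2 \<and> a1 \<noteq> a2 \<longrightarrow>
        (\<forall>a\<in>{a0, a1, a2}. \<exists>d. (3, d) \<in> F \<and> is_partial_fun A d \<and> d (tup3 a0 a1 a2) = a))"

definition apply_Q :: "'q set \<Rightarrow> nat \<Rightarrow> ((nat \<Rightarrow> 'a) \<Rightarrow> 'a) \<Rightarrow> (nat \<Rightarrow> 'q \<Rightarrow> 'a) \<Rightarrow> 'q \<Rightarrow> 'a" where
  "apply_Q Q n f h = (\<lambda>q \<in> Q. f (\<lambda>i \<in> {..<n}. h i q))"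

definition Inv_Q :: "'a set \<Rightarrow> 'q set \<Rightarrow> 'a op set \<Rightarrow> ('q \<Rightarrow> 'a) set set" where
  "Inv_Q A Q F = {H. H \<subseteq> Q \<rightarrow>\<^sub>E A \<and>
     (\<forall>n f h. (n, f) \<in> F \<longrightarrow> (\<forall>i<n. h i \<in> H) \<longrightarrow> apply_Q Q n f h \<in> H)}"

definition weakly_separates :: "('q \<Rightarrow> 'a) set \<Rightarrow> 'q \<Rightarrow> 'q \<Rightarrow> 'a \<Rightarrow> bool" where
  "weakly_separates H p q a \<longleftrightarrow>
     (\<exists>h1\<in>H. \<exists>h2\<in>H. h1 p = a \<and> h2 p = a \<and> h1 q \<noteq> h2 q)"

definition strongly_separates :: "('q \<Rightarrow> 'a) set \<Rightarrow> 'q \<Rightarrow> 'q \<Rightarrow> 'a \<Rightarrow> bool" where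
  "strongly_separates H p q a \<longleftrightarrow>
     (\<forall>b\<in>(\<lambda>h. h q) ` H. \<exists>h\<in>H. h p = a \<and> h q = b)"

end

theory Submission
  imports Defs
begin

theorem lemma1:
  fixes A :: "'a set" and Q :: "'q set" and H :: "('q \<Rightarrow> 'a) set" and F :: "'a op set"
  assumes "finite A" "A \<noteq> {}" "finite Q" "Q \<noteq> {}" "finite H" "H \<noteq> {}"
    and "H \<subseteq> Q \<rightarrow>\<^sub>E A"
    and "is_clone A F"
    and "Delta_partial A F \<or>
         ((\<exists>d. (3, d) \<in> F \<and> is_partial_fun A d) \<and> (\<forall>q\<in>Q. card ((\<lambda>h. h q) ` H) \<le> 2))"
    and "H \<in> Inv_Q A Q F"
    and "p \<in> Q" "q \<in> Q" "a \<in> (\<lambda>h. h p) ` H"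
    and "weakly_separates H p q a"
  shows "strongly_separates H p q a"
  unfolding strongly_separates_def
proof
  fix b assume "b \<in> (\<lambda>h. h q) ` H"
  then obtain g where g: "g \<in> H" "b = g q" by blast
  obtain h1 h2 where hh: "h1 \<in> H" "h2 \<in> H" "h1 p = a" "h2 p = a" "h1 q \<noteq> h2 q"
    using assms(14) unfolding weakly_separates_def by blast
  show "\<exists>h\<in>H. h p = a \<and> h q = b"
  proof (cases "b = h1 q \<or> b = h2 q")
    case True then show ?thesis using hh by blast
  next
    case False
    have inA: "\<And>h r. h \<in> H \<Longrightarrow> r \<in> Q \<Longrightarrow> h r \<in> A" using assms(7) by blast
    show ?thesis
    proof (cases "Delta_partial A F")
      case True
      have "h1 q \<in> A" "h2 q \<in> A" "b \<in> A" using inA hh g assms(12) by auto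
      then obtain d where d: "(3, d) \<in> F" "is_partial_fun A d" "d (tup3 (h1 q) (h2 q) b) = b"
        using True False hh(5) unfolding Delta_partial_def by (metis insertCI)
      define k where "k = (\<lambda>i::nat. if i = 0 then h1 else if i = 1 then h2 else g)"
      have kH: "\<forall>i<3. k i \<in> H" using hh g unfolding k_def by auto
      have mem: "apply_Q Q 3 d k \<in> H" using assms(10) d(1) kH unfolding Inv_Q_def by blast
      have ev: "\<And>r. r \<in> Q \<Longrightarrow> apply_Q Q 3 d k r = d (tup3 (h1 r) (h2 r) (g r))"
        unfolding apply_Q_def tup3_def k_def by (auto intro!: arg_cong[where f=d])
      have "apply_Q Q 3 d k p = a"
        using ev[OF assms(11)] d(2) hh inA g assms(11) unfolding is_partial_fun_def by metis
      moreover have "apply_Q Q 3 d k q = b"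
        using ev[OF assms(12)] d(3) g by simp
      ultimately show ?thesis using mem by blast
    next
      case F: False
      then have c: "card ((\<lambda>h. h q) ` H) \<le> 2" using assms(9,12) by blast
      have "{h1 q, h2 q, b} \<subseteq> (\<lambda>h. h q) ` H" using hh g by auto
      moreover have "card {h1 q, h2 q, b} = 3" using False hh(5) by auto
      ultimately have "3 \<le> card ((\<lambda>h. h q) ` H)"
        using assms(5) by (metis card_mono finite_imageI)
      with c show ?thesis by simp
    qed
  qed
qed

end
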